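(* Let $n\ge2$ and define $\psi:\mathcal K_0^n\times[0,1]\to\mathcal K_0^n$ by $\psi(A,0)=A$ and $\psi(A,t)=(A+t\mathbb B)\cap\frac{1-t}{t}\mathbb B$ for $t\in(0,1]$. Then $\psi$ is continuous with respect to $d_{AW}$, and for every $t\in[\frac{\sqrt5-1}{2},1)$ and every $A\in\mathcal K_0^n$ one has $\psi(A,t)=\frac{1-t}{t}\mathbb B$.
   Context: $\mathbb B$ is the closed Euclidean unit ball of $\mathbb R^n$. $\mathcal K_0^n$ is the family of closed convex subsets of $\mathbb R^n$ containing $0$, with the Attouch–Wets metric $d_{AW}(A,K)=\sup_{j\in\mathbb N}\min\{\frac1j,\sup_{\|x\|<j}|d(x,A)-d(x,K)|\}$, $d(x,A)=\inf_{a\in A}\|x-a\|$. *)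

theory Defs
  imports "HOL-Analysis.Analysis"
begin

definition K0 :: "('a::euclidean_space) set set" where
  "K0 = {A. closed A \<and> convex A \<and> 0 \<in> A}"

definition dAW :: "('a::euclidean_space) set \<Rightarrow> 'a set \<Rightarrow> real" where
  "dAW A K = (SUP j\<in>{1::nat..}. min (1 / real j)
                 (SUP x\<in>ball 0 (real j). \<bar>infdist x A - infdist x K\<bar>))"

definition psi :: "('a::euclidean_space) set \<Rightarrow> real \<Rightarrow> 'a set" where
  "psi A t = (if t = 0 then A
              else {a + b | a b. a \<in> A \<and> b \<in> cball 0 t} \<inter> cball 0 ((1 - t) / t))"

end

theory Submission imports Defs begin

abbreviation msum :: "('a::euclidean_space) set \<Rightarrow> real \<Rightarrow> 'a set" where
  "msum A t \<equiv> {a + b | a b. a \<in> A \<and> b \<in> cball 0 t}"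

lemma msum_eq: "msum A t = (\<Union>x\<in>A. \<Union>y\<in>cball 0 t. {x + y})" by blast

lemma msum_closed: "closed A \<Longrightarrow> closed (msum A t)"
  unfolding msum_eq by (rule closed_compact_sums) auto

lemma msum_convex: "convex A \<Longrightarrow> convex (msum A t)"
  unfolding msum_eq by (rule convex_sums) auto

lemma msum_zero: "0 \<in> A \<Longrightarrow> 0 \<le> t \<Longrightarrow> 0 \<in> msum A t"
  by (rule CollectI, rule exI[of _ 0], rule exI[of _ 0]) auto

lemma psi_K0: assumes "A \<in> K0" "t \<in> {0..1}" shows "psi A t \<in> K0"
proof (cases "t = 0")
  case True then show ?thesis using assms by (simp add: psi_def)
next
  case False
  then have t: "0 < t" "t \<le> 1" using assms by auto
  then have r: "0 \<le> (1 - t) / t" by simp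
  have "psi A t = msum A t \<inter> cball 0 ((1 - t) / t)" using False by (simp add: psi_def)
  moreover have a: "closed A" "convex A" "0 \<in> A" using assms by (auto simp: K0_def)
  moreover have "closed (msum A t)" by (rule msum_closed[OF a(1)])
  moreover have "convex (msum A t)" by (rule msum_convex[OF a(2)])
  moreover have "0 \<in> msum A t" by (rule msum_zero[OF a(3)]) (use t in simp)
  ultimately show ?thesis using r unfolding K0_def by (auto intro!: closed_Int convex_Int)
qed

lemma psi_big: assumes "A \<in> K0" "(sqrt 5 - 1) / 2 \<le> t" "t < 1"
  shows "psi A t = cball 0 ((1 - t) / t)"
proof -
  have s5: "sqrt 5 > 1" by (simp add: real_less_rsqrt)
  have "(sqrt 5 - 1)/2 > 0" using s5 by simp
  then have t0: "t > 0" using assms by linarith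
  have "sqrt 5 - 1 \<le> 2*t" using assms(2) by (simp add: divide_le_eq)
  then have "sqrt 5 \<le> 2*t+1" by linarith
  then have "(sqrt 5)^2 \<le> (2*t+1)^2" by (rule power_mono) simp
  then have "5 \<le> (2*t+1)^2" by simp
  then have "1 - t \<le> t*t" by (simp add: power2_eq_square algebra_simps)
  then have rt: "(1 - t)/t \<le> t" using t0 by (simp add: divide_le_eq)
  have "cball 0 ((1 - t)/t) \<subseteq> msum A t"
  proof
    fix z :: 'a assume "z \<in> cball 0 ((1 - t)/t)"
    then have "z \<in> cball 0 t" using rt by auto
    moreover have "0 \<in> A" using assms by (simp add: K0_def)
    ultimately show "z \<in> msum A t" by force
  qed
  then show ?thesis using t0 by (auto simp: psi_def)
qed

lemma infdist_lessD: assumes "infdist x A < d" "A \<noteq> {}" shows "\<exists>a\<in>A. dist x a < d"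
  using assms by (simp add: infdist_notempty cINF_less_iff)

lemma dAW_upper:
  fixes X Y :: "'a::euclidean_space set"
  assumes J: "J \<ge> 1" and h: "\<And>x. x \<in> ball 0 (real J) \<Longrightarrow> \<bar>infdist x X - infdist x Y\<bar> \<le> eps"
  shows "dAW X Y \<le> max (1 / real J) eps"
  unfolding dAW_def
proof (rule cSUP_least)
  show "{1::nat..} \<noteq> {}" by auto
  fix j :: nat assume j: "j \<in> {1..}"
  show "min (1 / real j) (SUP x\<in>ball 0 (real j). \<bar>infdist x X - infdist x Y\<bar>) \<le> max (1 / real J) eps"
  proof (cases "J \<le> j")
    case True
    then have "1 / real j \<le> 1 / real J" using J by (simp add: frac_le)
    then show ?thesis by linarith
  next
    case False
    have "(SUP x\<in>ball 0 (real j). \<bar>infdist x X - infdist x Y\<bar>) \<le> eps"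
    proof (rule cSUP_least)
      show "ball 0 (real j) \<noteq> {}" using j by auto
      fix x :: 'a assume "x \<in> ball 0 (real j)"
      then have "x \<in> ball 0 (real J)" using False by auto
      then show "\<bar>infdist x X - infdist x Y\<bar> \<le> eps" by (rule h)
    qed
    then show ?thesis by linarith
  qed
qed

lemma dAW_lower:
  fixes X Y :: "'a::euclidean_space set"
  assumes X: "0 \<in> X" and Y: "0 \<in> Y" and j: "j \<ge> 1" and dl: "dAW X Y < d" and dj: "d \<le> 1 / real j"
    and x: "x \<in> ball 0 (real j)"
  shows "\<bar>infdist x X - infdist x Y\<bar> < d"
proof -
  have bd: "bdd_above ((\<lambda>x. \<bar>infdist x X - infdist x Y\<bar>) ` ball 0 (real j))"
  proof (rule bdd_aboveI2)
    fix x :: 'a assume "x \<in> ball 0 (real j)"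
    then have "norm x < real j" by simp
    moreover have "infdist x X \<le> norm x" using infdist_le[OF X, of x] by simp
    moreover have "infdist x Y \<le> norm x" using infdist_le[OF Y, of x] by simp
    ultimately show "\<bar>infdist x X - infdist x Y\<bar> \<le> real j"
      using infdist_nonneg[of x X] infdist_nonneg[of x Y] by linarith
  qed
  have bd2: "bdd_above ((\<lambda>j. min (1 / real j) (SUP x\<in>ball 0 (real j). \<bar>infdist x X - infdist x Y\<bar>)) ` {1::nat..})"
  proof (rule bdd_aboveI2[where M=1])
    fix i :: nat assume "i \<in> {1..}"
    then have "1 / real i \<le> 1" by simp
    then show "min (1 / real i) (SUP x\<in>ball 0 (real i). \<bar>infdist x X - infdist x Y\<bar>) \<le> 1"
      by linarith
  qed
  have "min (1 / real j) (SUP x\<in>ball 0 (real j). \<bar>infdist x X - infdist x Y\<bar>) \<le> dAW X Y"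
    unfolding dAW_def by (rule cSUP_upper[OF _ bd2]) (use j in auto)
  then have "(SUP x\<in>ball 0 (real j). \<bar>infdist x X - infdist x Y\<bar>) < d" using dl dj by linarith
  moreover have "\<bar>infdist x X - infdist x Y\<bar> \<le> (SUP x\<in>ball 0 (real j). \<bar>infdist x X - infdist x Y\<bar>)"
    by (rule cSUP_upper[OF x bd])
  ultimately show ?thesis by linarith
qed

lemma incl_infdist:
  fixes X Y :: "'a::euclidean_space set"
  assumes X0: "0 \<in> X" and h: "\<forall>a\<in>X. norm a < \<rho> \<longrightarrow> infdist a Y \<le> eps"
    and x: "norm x < R" and R: "2*R + 1 \<le> \<rho>"
  shows "infdist x Y \<le> infdist x X + eps"
proof (rule field_le_epsilon)
  fix \<eta> :: real assume \<eta>: "0 < \<eta>"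
  define \<eta>' where "\<eta>' = min \<eta> (1/2)"
  have \<eta>': "0 < \<eta>'" "\<eta>' \<le> \<eta>" "\<eta>' \<le> 1/2" using \<eta> by (auto simp: \<eta>'_def)
  have "infdist x X < infdist x X + \<eta>'" using \<eta>' by simp
  then obtain a where a: "a \<in> X" "dist x a < infdist x X + \<eta>'"
    using infdist_lessD X0 by blast
  have "infdist x X \<le> norm x" using infdist_le[OF X0, of x] by simp
  have "norm a \<le> norm x + dist x a"
    by (metis dist_commute dist_norm norm_triangle_sub add.commute)
  then have "norm a < \<rho>" using a \<open>infdist x X \<le> norm x\<close> \<eta>' x R by linarith
  then have "infdist a Y \<le> eps" using h a by blast
  moreover have "infdist x Y \<le> infdist a Y + dist x a" by (rule infdist_triangle)
  ultimately show "infdist x Y \<le> infdist x X + eps + \<eta>" using a \<eta>' by linarith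
qed

lemma scale_in:
  fixes C :: "'a::real_normed_vector set"
  assumes "convex C" "0 \<in> C" "y \<in> C" "0 \<le> l" "l \<le> 1"
  shows "l *\<^sub>R y \<in> C"
  using convexD[OF assms(1,3,2), of l "1 - l"] assms by simp


definition clip :: "real \<Rightarrow> 'a::real_normed_vector \<Rightarrow> 'a" where
  "clip c v = (if norm v \<le> c then v else (c / norm v) *\<^sub>R v)"

lemma clip_props:
  fixes v :: "'a::real_normed_vector"
  assumes c: "0 \<le> c"
  shows "norm (clip c v) \<le> c" "norm v \<le> c \<Longrightarrow> clip c v = v"
    "norm (v - clip c v) \<le> max 0 (norm v - c)"
    "\<exists>l. 0 \<le> l \<and> l \<le> 1 \<and> clip c v = l *\<^sub>R v"
proof -
  show "norm v \<le> c \<Longrightarrow> clip c v = v" by (simp add: clip_def)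
  have "norm (clip c v) \<le> c \<and> norm (v - clip c v) \<le> max 0 (norm v - c) \<and>
      (\<exists>l. 0 \<le> l \<and> l \<le> 1 \<and> clip c v = l *\<^sub>R v)"
  proof (cases "norm v \<le> c")
    case True
    then show ?thesis by (auto simp: clip_def intro!: exI[of _ 1])
  next
    case False
    then have nv: "norm v > 0" using c by linarith
    define l where "l = c / norm v"
    have l: "0 \<le> l" "l \<le> 1" using False nv c by (auto simp: l_def)
    have cl: "clip c v = l *\<^sub>R v" using False by (simp add: clip_def l_def)
    have "norm (clip c v) = l * norm v" using cl l by simp
    also have "\<dots> = c" using nv by (simp add: l_def)
    finally have n1: "norm (clip c v) = c" .
    have "v - clip c v = (1 - l) *\<^sub>R v" by (simp add: cl scaleR_diff_left)
    then have "norm (v - clip c v) = (1 - l) * norm v" using l by simp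
    also have "\<dots> = norm v - c" using nv by (simp add: l_def left_diff_distrib)
    finally show ?thesis using n1 cl l by auto
  qed
  then show "norm (clip c v) \<le> c" "norm (v - clip c v) \<le> max 0 (norm v - c)"
    "\<exists>l. 0 \<le> l \<and> l \<le> 1 \<and> clip c v = l *\<^sub>R v" by auto
qed
lemma core:
  fixes Y :: "'a::euclidean_space set"
  assumes Yc: "convex Y" "0 \<in> Y" and s': "0 \<le> s'" and r': "0 \<le> r'"
    and a: "a = x + b" "norm b \<le> s" "norm a \<le> r" and y: "y \<in> Y" "dist x y \<le> \<delta>"
  shows "infdist a (msum Y s' \<inter> cball 0 r') \<le> 2*\<delta> + 2*\<bar>s - s'\<bar> + \<bar>r - r'\<bar>"
proof -
  define b' where "b' = clip s' b"
  have b'1: "norm b' \<le> s'" unfolding b'_def by (rule clip_props(1)[OF s'])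
  have "norm (b - b') \<le> max 0 (norm b - s')" unfolding b'_def by (rule clip_props(3)[OF s'])
  then have b'2: "norm (b - b') \<le> \<bar>s - s'\<bar>" using a(2) by linarith
  define y' where "y' = y + b'"
  have y'in: "y' \<in> msum Y s'" unfolding y'_def mem_Collect_eq
    by (rule exI[of _ y], rule exI[of _ b']) (use y b'1 in simp)
  have "a - y' = (x - y) + (b - b')" unfolding a(1) y'_def by simp
  then have "norm (a - y') \<le> norm (x - y) + norm (b - b')" using norm_triangle_ineq[of "x-y" "b-b'"] by simp
  then have dy': "dist a y' \<le> \<delta> + \<bar>s - s'\<bar>" using y b'2 by (simp add: dist_norm)
  have "norm y' \<le> norm a + norm (y' - a)" by (rule norm_triangle_sub)
  then have "norm y' \<le> norm a + dist a y'" by (simp add: dist_norm norm_minus_commute)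
  then have ny': "norm y' \<le> r + \<delta> + \<bar>s - s'\<bar>" using dy' a(3) by linarith
  define z where "z = clip r' y'"
  have conv: "convex (msum Y s')" by (rule msum_convex[OF Yc(1)])
  have zero: "0 \<in> msum Y s'" by (rule msum_zero[OF Yc(2) s'])
  obtain l where l: "0 \<le> l" "l \<le> 1" "z = l *\<^sub>R y'" using clip_props(4)[OF r', of y'] z_def by blast
  have "z \<in> msum Y s'" unfolding l(3) by (rule scale_in[OF conv zero y'in l(1,2)])
  moreover have "norm z \<le> r'" unfolding z_def by (rule clip_props(1)[OF r'])
  ultimately have zin: "z \<in> msum Y s' \<inter> cball 0 r'" by simp
  have "norm (y' - z) \<le> max 0 (norm y' - r')" unfolding z_def by (rule clip_props(3)[OF r'])
  then have dz: "dist y' z \<le> \<bar>r - r'\<bar> + \<delta> + \<bar>s - s'\<bar>" using ny' y(2) zero_le_dist[of x y] unfolding dist_norm by (smt (verit))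
  have "dist a z \<le> dist a y' + dist y' z" by (rule dist_triangle)
  then have "dist a z \<le> 2*\<delta> + 2*\<bar>s - s'\<bar> + \<bar>r - r'\<bar>" using dy' dz by argo
  then show ?thesis by (rule infdist_le2[OF zin])
qed
lemma reduce:
  fixes P P' :: "'a::euclidean_space set"
  assumes P: "0 \<in> P" and P': "0 \<in> P'" and J: "J \<ge> 1" "1 / real J < e"
    and h1: "\<forall>a\<in>P. norm a < 2 * real J + 1 \<longrightarrow> infdist a P' \<le> e/2"
    and h2: "\<forall>a\<in>P'. norm a < 2 * real J + 1 \<longrightarrow> infdist a P \<le> e/2"
  shows "dAW P P' < e"
proof -
  have "dAW P P' \<le> max (1 / real J) (e/2)"
  proof (rule dAW_upper[OF J(1)])
    fix x :: 'a assume "x \<in> ball 0 (real J)"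
    then have x: "norm x < real J" by simp
    have "infdist x P' \<le> infdist x P + e/2" by (rule incl_infdist[OF P h1 x]) simp
    moreover have "infdist x P \<le> infdist x P' + e/2" by (rule incl_infdist[OF P' h2 x]) simp
    ultimately show "\<bar>infdist x P - infdist x P'\<bar> \<le> e/2" by linarith
  qed
  moreover have "0 < 1 / real J" using J by simp
  then have "e/2 < e" using J by linarith
  ultimately show ?thesis using J by linarith
qed

lemma nearpt:
  fixes A A' :: "'a::euclidean_space set"
  assumes A: "A \<in> K0" and A': "A' \<in> K0" and j: "j \<ge> 1" and dl: "dAW A A' < d" and dj: "d \<le> 1 / real j"
    and x: "norm x < real j"
  shows "x \<in> A \<Longrightarrow> \<exists>y\<in>A'. dist x y < d" and "x \<in> A' \<Longrightarrow> \<exists>y\<in>A. dist x y < d"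
proof -
  have 0: "0 \<in> A" "0 \<in> A'" using A A' by (auto simp: K0_def)
  have h: "\<bar>infdist x A - infdist x A'\<bar> < d"
    by (rule dAW_lower[OF 0 j dl dj]) (use x in simp)
  show "x \<in> A \<Longrightarrow> \<exists>y\<in>A'. dist x y < d"
  proof -
    assume "x \<in> A"
    then have "infdist x A' < d" using h by simp
    then show ?thesis using 0 infdist_lessD by blast
  qed
  show "x \<in> A' \<Longrightarrow> \<exists>y\<in>A. dist x y < d"
  proof -
    assume "x \<in> A'"
    then have "infdist x A < d" using h by simp
    then show ?thesis using 0 infdist_lessD by blast
  qed
qed

lemma psi_elem:
  assumes "a \<in> psi A t" "0 \<le> t"
  obtains x b where "x \<in> A" "a = x + b" "norm b \<le> t"
proof (cases "t = 0")
  case True then show ?thesis using that[of a 0] assms by (simp add: psi_def)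
next
  case False then show ?thesis using that assms by (auto simp: psi_def)
qed

lemma cont0:
  fixes A :: "'a::euclidean_space set"
  assumes A: "A \<in> K0" and t: "t = 0" and e: "e > 0" and J1: "J \<ge> 1" "1 / real J < e"
  shows "\<exists>d>0. \<forall>A'\<in>K0. \<forall>t'\<in>{0..1}. dAW A A' < d \<and> \<bar>t - t'\<bar> < d \<longrightarrow> dAW (psi A t) (psi A' t') < e"
proof -
  define \<rho> where "\<rho> = 2 * real J + 1"
  define jj :: nat where "jj = 2*J + 3"
  define \<delta> where "\<delta> = min (e/4) (1/(\<rho>+2))"
  define d where "d = min \<delta> (1 / real jj)"
  have \<rho>: "\<rho> \<ge> 3" using J1 by (simp add: \<rho>_def)
  have \<delta>: "0 < \<delta>" "\<delta> \<le> e/4" "\<delta> \<le> 1/(\<rho>+2)" using e \<rho> by (auto simp: \<delta>_def)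
  have "1/(\<rho>+2) \<le> 1" using \<rho> by simp
  then have \<delta>1: "\<delta> \<le> 1" using \<delta> by linarith
  have jj: "jj \<ge> 1" "real jj = \<rho> + 2" by (auto simp: jj_def \<rho>_def)
  have d: "0 < d" "d \<le> \<delta>" "d \<le> 1/real jj" using \<delta> jj by (auto simp: d_def)
  show ?thesis
  proof (intro exI[of _ d] conjI ballI impI d(1))
    fix A' :: "'a set" and t' assume A': "A' \<in> K0" and t': "t' \<in> {0..1}"
      and h: "dAW A A' < d \<and> \<bar>t - t'\<bar> < d"
    then have dl: "dAW A A' < d" and tt: "t' < d" using t by auto
    have P0: "psi A t = A" using t by (simp add: psi_def)
    have Pk: "psi A t \<in> K0" "psi A' t' \<in> K0" using psi_K0[OF A, of t] psi_K0[OF A' t'] t by auto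
    show "dAW (psi A t) (psi A' t') < e"
    proof (rule reduce[OF _ _ J1])
      show "0 \<in> psi A t" "0 \<in> psi A' t'" using Pk by (auto simp: K0_def)
      show "\<forall>a\<in>psi A t. norm a < 2 * real J + 1 \<longrightarrow> infdist a (psi A' t') \<le> e/2"
      proof (intro ballI impI)
        fix a assume a: "a \<in> psi A t" "norm a < 2*real J+1"
        then have aA: "a \<in> A" using P0 by simp
        have "norm a < real jj" using a jj \<rho>_def by simp
        then obtain y where y: "y \<in> A'" "dist a y < d"
          using nearpt(1)[OF A A' jj(1) dl d(3)] aA by blast
        have "y \<in> psi A' t'"
        proof (cases "t' = 0")
          case True then show ?thesis using y by (simp add: psi_def)
        next
          case False
          then have t'p: "0 < t'" using t' by simp
          have "y \<in> msum A' t'"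
            by (rule CollectI, rule exI[of _ y], rule exI[of _ 0]) (use y t'p in simp)
          moreover have "norm y \<le> (1 - t')/t'"
          proof -
            have "norm y \<le> norm a + norm (y - a)" by (rule norm_triangle_sub)
            then have "norm y \<le> norm a + dist a y" by (simp add: dist_norm norm_minus_commute)
            then have "norm y < \<rho> + 1" using a y d \<delta>1 \<rho>_def by linarith
            moreover have "t' * (\<rho> + 2) < 1"
            proof -
              have "t' < 1/(\<rho>+2)" using tt d \<delta> by linarith
              then show ?thesis using \<rho> by (simp add: field_simps)
            qed
            then have "\<rho> + 1 \<le> (1 - t')/t'" using t'p by (simp add: field_simps)
            ultimately show ?thesis by linarith
          qed
          ultimately show ?thesis using False by (simp add: psi_def)
        qed
        then have "infdist a (psi A' t') \<le> dist a y" by (rule infdist_le)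
        then show "infdist a (psi A' t') \<le> e/2" using y d \<delta> e by linarith
      qed
      show "\<forall>a\<in>psi A' t'. norm a < 2 * real J + 1 \<longrightarrow> infdist a (psi A t) \<le> e/2"
      proof (intro ballI impI)
        fix a assume a: "a \<in> psi A' t'" "norm a < 2*real J+1"
        obtain x' b where xb: "x' \<in> A'" "a = x' + b" "norm b \<le> t'"
          using psi_elem[OF a(1)] t' by auto
        have "norm x' \<le> norm a + norm b" using norm_triangle_ineq4[of a b] xb(2) by simp
        then have "norm x' < real jj" using a xb tt d \<delta>1 jj \<rho>_def by linarith
        then obtain x where x: "x \<in> A" "dist x' x < d" using nearpt(2)[OF A A' jj(1) dl d(3)] xb by blast
        have "dist a x \<le> dist a x' + dist x' x" by (rule dist_triangle)
        moreover have "dist a x' = norm b" using xb by (simp add: dist_norm)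
        ultimately have "dist a x \<le> e/2" using x xb tt d \<delta> by linarith
        then show "infdist a (psi A t) \<le> e/2" unfolding P0 by (rule infdist_le2[OF x(1)])
      qed
    qed
  qed
qed
lemma contp:
  fixes A :: "'a::euclidean_space set"
  assumes A: "A \<in> K0" and tp: "0 < t" "t \<le> 1" and e: "e > 0" and J1: "J \<ge> 1" "1 / real J < e"
  shows "\<exists>d>0. \<forall>A'\<in>K0. \<forall>t'\<in>{0..1}. dAW A A' < d \<and> \<bar>t - t'\<bar> < d \<longrightarrow> dAW (psi A t) (psi A' t') < e"
proof -
  define r where "r = (1 - t)/t"
  have r0: "0 \<le> r" using tp by (simp add: r_def)
  define jj :: nat where "jj = nat \<lceil>r\<rceil> + 3"
  have jj: "jj \<ge> 1" "r + 3 \<le> real jj" using r0 by (auto simp: jj_def)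
  define \<delta> where "\<delta> = min (t/2) (min (e*t^2/16) (t^2/2))"
  define d where "d = min \<delta> (1 / real jj)"
  have t2: "0 < t^2" "t^2 \<le> 1" using tp by (auto simp: power_le_one)
  have \<delta>: "0 < \<delta>" "\<delta> \<le> t/2" "\<delta> \<le> e*t^2/16" "\<delta> \<le> t^2/2" using tp e t2 by (auto simp: \<delta>_def)
  have d: "0 < d" "d \<le> \<delta>" "d \<le> 1/real jj" using \<delta> jj by (auto simp: d_def)
  have A0: "0 \<in> A" "convex A" using A by (auto simp: K0_def)
  have P: "psi A t = msum A t \<inter> cball 0 r" using tp by (simp add: psi_def r_def)
  show ?thesis
  proof (intro exI[of _ d] conjI ballI impI d(1))
    fix A' :: "'a set" and t' assume A': "A' \<in> K0" and t': "t' \<in> {0..1}"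
      and h: "dAW A A' < d \<and> \<bar>t - t'\<bar> < d"
    then have dl: "dAW A A' < d" and tt: "\<bar>t - t'\<bar> < \<delta>" using d by auto
    have A'0: "0 \<in> A'" "convex A'" using A' by (auto simp: K0_def)
    have t'p: "t/2 < t'" "t' \<le> 1" using tt \<delta> t' by auto
    then have t'0: "0 < t'" using tp by linarith
    define r' where "r' = (1 - t')/t'"
    have r'0: "0 \<le> r'" using t'p t'0 by (simp add: r'_def)
    have P': "psi A' t' = msum A' t' \<inter> cball 0 r'" using t'0 by (simp add: psi_def r'_def)
    have "r - r' = (t' - t)/(t*t')" unfolding r_def r'_def using tp t'0 by (simp add: field_simps)
    then have "\<bar>r - r'\<bar> = \<bar>t - t'\<bar>/(t*t')" using tp t'0 by (simp add: abs_minus_commute)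
    also have "\<dots> \<le> \<delta>/(t*t')" using tt tp t'0 by (simp add: divide_right_mono)
    also have "\<dots> \<le> \<delta>/(t*(t/2))"
      by (rule divide_left_mono) (use \<delta> tp t'p in auto)
    also have "\<dots> = 2*\<delta>/t^2" by (simp add: power2_eq_square)
    finally have rr: "\<bar>r - r'\<bar> \<le> 2*\<delta>/t^2" .
    have "2*\<delta>/t^2 \<le> 1" using \<delta> t2 by (simp add: divide_le_eq)
    then have rr1: "\<bar>r - r'\<bar> \<le> 1" using rr by linarith
    have b1: "2*\<delta>/t^2 \<le> e/8" using \<delta> t2 by (simp add: divide_le_eq)
    have "4*\<delta> \<le> e*t^2/4" using \<delta> by simp
    moreover have "e*t^2/4 \<le> e/4" using e t2 by simp
    ultimately have bound: "2*\<delta> + 2*\<bar>t - t'\<bar> + \<bar>r - r'\<bar> \<le> e/2" using rr b1 tt by argo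
    show "dAW (psi A t) (psi A' t') < e"
    proof (rule reduce[OF _ _ J1])
      show "0 \<in> psi A t" "0 \<in> psi A' t'" using psi_K0[OF A, of t] psi_K0[OF A' t'] tp
        by (auto simp: K0_def)
      show "\<forall>a\<in>psi A t. norm a < 2 * real J + 1 \<longrightarrow> infdist a (psi A' t') \<le> e/2"
      proof (intro ballI impI)
        fix a assume a: "a \<in> psi A t" "norm a < 2*real J+1"
        obtain x b where xb: "x \<in> A" "a = x + b" "norm b \<le> t"
          using psi_elem[OF a(1)] tp by auto
        have na: "norm a \<le> r" using a(1) P by simp
        have "norm x \<le> norm a + norm b" using norm_triangle_ineq4[of a b] xb(2) by simp
        then have "norm x < real jj" using na xb tp jj by linarith
        then obtain y where y: "y \<in> A'" "dist x y < d" using nearpt(1)[OF A A' jj(1) dl d(3)] xb by blast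
        have "infdist a (msum A' t' \<inter> cball 0 r') \<le> 2*\<delta> + 2*\<bar>t - t'\<bar> + \<bar>r - r'\<bar>"
          by (rule core[OF A'0(2,1) _ r'0 xb(2,3) na y(1)]) (use t'0 y d in auto)
        then show "infdist a (psi A' t') \<le> e/2" using P' bound by simp
      qed
      show "\<forall>a\<in>psi A' t'. norm a < 2 * real J + 1 \<longrightarrow> infdist a (psi A t) \<le> e/2"
      proof (intro ballI impI)
        fix a assume a: "a \<in> psi A' t'" "norm a < 2*real J+1"
        obtain x' b where xb: "x' \<in> A'" "a = x' + b" "norm b \<le> t'"
          using psi_elem[OF a(1)] t'0 by auto
        have na: "norm a \<le> r'" using a(1) P' by simp
        have "norm x' \<le> norm a + norm b" using norm_triangle_ineq4[of a b] xb(2) by simp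
        then have "norm x' < real jj" using na xb t'p rr1 jj by linarith
        then obtain x where x: "x \<in> A" "dist x' x < d" using nearpt(2)[OF A A' jj(1) dl d(3)] xb by blast
        have "infdist a (msum A t \<inter> cball 0 r) \<le> 2*\<delta> + 2*\<bar>t' - t\<bar> + \<bar>r' - r\<bar>"
          by (rule core[OF A0(2,1) _ r0 xb(2,3) na x(1)]) (use tp x d in auto)
        then show "infdist a (psi A t) \<le> e/2" using P bound by (simp add: abs_minus_commute)
      qed
    qed
  qed
qed

lemma cont:
  fixes A :: "'a::euclidean_space set"
  assumes A: "A \<in> K0" and t: "t \<in> {0..1}" and e: "e > 0"
  shows "\<exists>d>0. \<forall>A'\<in>K0. \<forall>t'\<in>{0..1}. dAW A A' < d \<and> \<bar>t - t'\<bar> < d \<longrightarrow> dAW (psi A t) (psi A' t') < e"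
proof -
  obtain J :: nat where J: "J > 0" "inverse (real J) < e" using ex_inverse_of_nat_less[OF e] by auto
  then have J1: "J \<ge> 1" "1 / real J < e" by (auto simp: inverse_eq_divide)
  show ?thesis
  proof (cases "t = 0")
    case True then show ?thesis by (rule cont0[OF A _ e J1])
  next
    case False then show ?thesis using t by (intro contp[OF A _ _ e J1]) auto
  qed
qed

theorem lemma4p1:
  assumes "CARD('n) \<ge> 2"
  shows "(\<forall>A \<in> (K0 :: (real ^ 'n) set set). \<forall>t \<in> {0..1}. psi A t \<in> K0)
    \<and> (\<forall>A \<in> (K0 :: (real ^ 'n) set set). \<forall>t \<in> {0..1}. \<forall>e > 0. \<exists>d > 0.
          \<forall>A' \<in> K0. \<forall>t' \<in> {0..1}. dAW A A' < d \<and> \<bar>t - t'\<bar> < d \<longrightarrow>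
             dAW (psi A t) (psi A' t') < e)
    \<and> (\<forall>A \<in> (K0 :: (real ^ 'n) set set). \<forall>t.
          (sqrt 5 - 1) / 2 \<le> t \<and> t < 1 \<longrightarrow> psi A t = cball 0 ((1 - t) / t))"
  using psi_K0 cont psi_big by blast

end
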